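(* Let $R$ be an associative ring and let $S=\begin{pmatrix}A&B\\ C&D\end{pmatrix}$ be a non-commuting switch over $R$. Let $Q=(1-A)(1-D)$ and let $S'=\begin{pmatrix}0&1\\ Q&1-Q\end{pmatrix}$. For $n\geq 2$ let $M$ be the $n\times n$ matrix over $R$ with $M_{11}=1$, $M_{1c}=0$ for $c>1$, and for $r\geq 2$: $M_{rc}=B^{c-1}A$ for $1\le c<r$, $M_{rr}=B^{r-1}$, $M_{rc}=0$ for $c>r$ (so each row after the first starts with $A$ followed by $B$ times the previous row). Then $M$ is invertible and $\rho(S,n)=M^{-1}\rho(S',n)M$, i.e. for each $i=1,\dots,n-1$, $$I_{i-1}\oplus S\oplus I_{n-i-1}=M^{-1}\,(I_{i-1}\oplus S'\oplus I_{n-i-1})\,M.$$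
   Context: A non-commuting switch over $R$ is $S=\begin{pmatrix}A&B\\ C&D\end{pmatrix}$ where $A$, $A-1$, $B$ are invertible elements of $R$ that do not commute and satisfy the fundamental equation $A^{-1}B^{-1}AB-BA^{-1}B^{-1}A=B^{-1}AB-A$, and $C=A^{-1}B^{-1}A(1-A)$, $D=1-A^{-1}B^{-1}AB$. For a $2\times 2$ matrix $S$ over $R$, $\rho(S,n)$ is the assignment sending the standard braid generator $\sigma_i$ ($1\le i\le n-1$) to the $n\times n$ block-diagonal matrix $I_{i-1}\oplus S\oplus I_{n-i-1}$. *)

theory Defs
  imports Main
begin

text \<open>Square matrices over a (not necessarily commutative) ring are represented as
functions nat => nat => 'a, with rows/columns indexed by 1..n; entries outside
this range are irrelevant.\<close>

definition invertible_elem :: "'a::ring_1 \<Rightarrow> bool" where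
  "invertible_elem x \<longleftrightarrow> (\<exists>y. x * y = 1 \<and> y * x = 1)"

definition mat_mult :: "nat \<Rightarrow> (nat \<Rightarrow> nat \<Rightarrow> 'a::ring_1) \<Rightarrow> (nat \<Rightarrow> nat \<Rightarrow> 'a) \<Rightarrow> nat \<Rightarrow> nat \<Rightarrow> 'a" where
  "mat_mult n X Y r c = (\<Sum>k = 1..n. X r k * Y k c)"

definition mat_id :: "nat \<Rightarrow> nat \<Rightarrow> 'a::ring_1" where
  "mat_id r c = (if r = c then 1 else 0)"

definition mat_eq :: "nat \<Rightarrow> (nat \<Rightarrow> nat \<Rightarrow> 'a) \<Rightarrow> (nat \<Rightarrow> nat \<Rightarrow> 'a) \<Rightarrow> bool" where
  "mat_eq n X Y \<longleftrightarrow> (\<forall>r c. 1 \<le> r \<and> r \<le> n \<and> 1 \<le> c \<and> c \<le> n \<longrightarrow> X r c = Y r c)"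

definition mat2 :: "'a \<Rightarrow> 'a \<Rightarrow> 'a \<Rightarrow> 'a \<Rightarrow> nat \<Rightarrow> nat \<Rightarrow> 'a::ring_1" where
  "mat2 a b c d r s = (if r = 1 \<and> s = 1 then a else if r = 1 \<and> s = 2 then b
                       else if r = 2 \<and> s = 1 then c else if r = 2 \<and> s = 2 then d else 0)"

definition rho :: "(nat \<Rightarrow> nat \<Rightarrow> 'a::ring_1) \<Rightarrow> nat \<Rightarrow> nat \<Rightarrow> nat \<Rightarrow> nat \<Rightarrow> 'a" where
  "rho S n i r c = (if (r = i \<or> r = i + 1) \<and> (c = i \<or> c = i + 1)
                    then S (r + 1 - i) (c + 1 - i) else mat_id r c)"

definition inverse_elem :: "'a::ring_1 \<Rightarrow> 'a" where
  "inverse_elem x = (THE y. x * y = 1 \<and> y * x = 1)"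

definition nc_switch :: "'a::ring_1 \<Rightarrow> 'a \<Rightarrow> 'a \<Rightarrow> 'a \<Rightarrow> bool" where
  "nc_switch A B C D \<longleftrightarrow>
     invertible_elem A \<and> invertible_elem (A - 1) \<and> invertible_elem B \<and> A * B \<noteq> B * A \<and>
     (let Ai = inverse_elem A; Bi = inverse_elem B in
        Ai * Bi * A * B - B * Ai * Bi * A = Bi * A * B - A \<and>
        C = Ai * Bi * A * (1 - A) \<and> D = 1 - Ai * Bi * A * B)"

end

theory Submission imports Defs begin

lemma sum_two:
  fixes f :: "nat \<Rightarrow> 'a::comm_monoid_add"
  assumes "a \<noteq> b" "\<And>k. k \<in> {1..n} \<Longrightarrow> k \<noteq> a \<Longrightarrow> k \<noteq> b \<Longrightarrow> f k = 0"
  shows "sum f {1..n} = (if a \<in> {1..n} then f a else 0) + (if b \<in> {1..n} then f b else 0)"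
proof -
  have "sum f {1..n} = (\<Sum>k\<in>{1..n}. (if k = a then f k else 0) + (if k = b then f k else 0))"
    by (rule sum.cong) (use assms in auto)
  also have "\<dots> = (if a \<in> {1..n} then f a else 0) + (if b \<in> {1..n} then f b else 0)"
    by (simp only: sum.distrib sum.delta finite_atLeastAtMost)
  finally show ?thesis .
qed

lemma mat_mult_assoc:
  "mat_mult n (mat_mult n X Y) Z r c = mat_mult n X (mat_mult n Y Z) r c"
proof -
  have "mat_mult n (mat_mult n X Y) Z r c = (\<Sum>k\<in>{1..n}. \<Sum>j\<in>{1..n}. X r j * Y j k * Z k c)"
    unfolding mat_mult_def by (simp add: sum_distrib_right)
  also have "\<dots> = (\<Sum>j\<in>{1..n}. \<Sum>k\<in>{1..n}. X r j * Y j k * Z k c)"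
    by (rule sum.swap)
  also have "\<dots> = mat_mult n X (mat_mult n Y Z) r c"
    unfolding mat_mult_def by (simp add: sum_distrib_left mult.assoc)
  finally show ?thesis .
qed

lemma mat_mult_cong:
  assumes "mat_eq n X X'" "mat_eq n Y Y'"
  shows "mat_eq n (mat_mult n X Y) (mat_mult n X' Y')"
  using assms unfolding mat_eq_def mat_mult_def by (auto intro!: sum.cong)

lemma mat_id_left: "mat_eq n (mat_mult n mat_id Y) Y"
proof -
  have "mat_mult n mat_id Y r c = Y r c" if "1 \<le> r" "r \<le> n" for r c
    unfolding mat_mult_def using that
    by (subst sum_two[where a=r and b=0]) (auto simp: mat_id_def)
  then show ?thesis unfolding mat_eq_def by auto
qed

lemma mat_id_right: "mat_eq n (mat_mult n Y mat_id) Y"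
proof -
  have "mat_mult n Y mat_id r c = Y r c" if "1 \<le> c" "c \<le> n" for r c
    unfolding mat_mult_def using that
    by (subst sum_two[where a=c and b=0]) (auto simp: mat_id_def)
  then show ?thesis unfolding mat_eq_def by auto
qed

lemma mat_eq_sym: "mat_eq n X Y \<Longrightarrow> mat_eq n Y X" unfolding mat_eq_def by auto
lemma mat_eq_trans[trans]: "mat_eq n X Y \<Longrightarrow> mat_eq n Y Z \<Longrightarrow> mat_eq n X Z" unfolding mat_eq_def by auto
lemma mat_eq_refl: "mat_eq n X X" unfolding mat_eq_def by auto

lemma assoc_eq: "mat_eq n (mat_mult n (mat_mult n X Y) Z) (mat_mult n X (mat_mult n Y Z))"
  unfolding mat_eq_def using mat_mult_assoc by metis

lemma inv_prod:
  assumes "mat_eq n (mat_mult n P P') mat_id" "mat_eq n (mat_mult n P' P) mat_id"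
    "mat_eq n (mat_mult n Q Q') mat_id" "mat_eq n (mat_mult n Q' Q) mat_id"
  shows "mat_eq n (mat_mult n (mat_mult n P Q) (mat_mult n Q' P')) mat_id"
        "mat_eq n (mat_mult n (mat_mult n Q' P') (mat_mult n P Q)) mat_id"
proof -
  have "mat_eq n (mat_mult n (mat_mult n P Q) (mat_mult n Q' P')) (mat_mult n P (mat_mult n Q (mat_mult n Q' P')))"
    by (rule assoc_eq)
  also have "mat_eq n \<dots> (mat_mult n P (mat_mult n (mat_mult n Q Q') P'))"
    by (rule mat_mult_cong[OF mat_eq_refl mat_eq_sym[OF assoc_eq]])
  also have "mat_eq n \<dots> (mat_mult n P (mat_mult n mat_id P'))"
    by (rule mat_mult_cong[OF mat_eq_refl mat_mult_cong[OF assms(3) mat_eq_refl]])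
  also have "mat_eq n \<dots> (mat_mult n P P')"
    by (rule mat_mult_cong[OF mat_eq_refl mat_id_left])
  also have "mat_eq n \<dots> mat_id" by (rule assms(1))
  finally show "mat_eq n (mat_mult n (mat_mult n P Q) (mat_mult n Q' P')) mat_id" .
  have "mat_eq n (mat_mult n (mat_mult n Q' P') (mat_mult n P Q)) (mat_mult n Q' (mat_mult n P' (mat_mult n P Q)))"
    by (rule assoc_eq)
  also have "mat_eq n \<dots> (mat_mult n Q' (mat_mult n (mat_mult n P' P) Q))"
    by (rule mat_mult_cong[OF mat_eq_refl mat_eq_sym[OF assoc_eq]])
  also have "mat_eq n \<dots> (mat_mult n Q' (mat_mult n mat_id Q))"
    by (rule mat_mult_cong[OF mat_eq_refl mat_mult_cong[OF assms(2) mat_eq_refl]])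
  also have "mat_eq n \<dots> (mat_mult n Q' Q)"
    by (rule mat_mult_cong[OF mat_eq_refl mat_id_left])
  also have "mat_eq n \<dots> mat_id" by (rule assms(4))
  finally show "mat_eq n (mat_mult n (mat_mult n Q' P') (mat_mult n P Q)) mat_id" .
qed

lemma ring_facts:
  fixes A B Ai Bi C D Q :: "'a::ring_1"
  assumes a1: "A*Ai=1" and a2: "Ai*A=1" and b1: "B*Bi=1" and b2: "Bi*B=1"
   and fund: "Ai*Bi*A*B - B*Ai*Bi*A = Bi*A*B - A"
   and Cd: "C = Ai*Bi*A*(1-A)" and Dd: "D = 1 - Ai*Bi*A*B"
   and Qd: "Q = (1-A)*(1-D)"
  shows "A*A + B*A*C = A" "A*B + B*A*D = B*A" "Q*B = B*Q"
        "A*A + B*C = Q + (1-Q)*A" "A*B + B*D = (1-Q)*B"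
proof -
  define U where "U = Ai*Bi*A"
  have cA: "A*(Ai*x) = x" for x by (metis a1 mult.assoc mult_1_left)
  have cB: "B*(Bi*x) = x" for x by (metis b1 mult.assoc mult_1_left)
  have AU: "A*U = Bi*A" unfolding U_def using cA by (simp add: mult.assoc)
  have BAU: "B*(A*(U*x)) = A*x" for x using AU cB by (metis mult.assoc)
  have e: "U*B - B*U = Bi*A*B - A" using fund unfolding U_def by (simp add: mult.assoc)
  have "Q = (1-A)*(U*B)" using Qd Dd U_def by (simp add: mult.assoc)
  also have "\<dots> = U*B - A*U*B" by (simp add: algebra_simps)
  also have "\<dots> = U*B - Bi*A*B" using AU by simp
  finally have Q1: "Q = U*B - Bi*A*B" .
  have "U*B - Bi*A*B - (B*U - A) = (U*B - B*U) - (Bi*A*B - A)" by (simp add: algebra_simps)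
  also have "\<dots> = 0" using e by simp
  finally have Q2: "Q = B*U - A" using Q1 by simp
  have CU: "C = U*(1-A)" using Cd U_def by (simp add: mult.assoc)
  have DU: "D = 1 - U*B" using Dd U_def by (simp add: mult.assoc)
  have "B*A*C = A*(1-A)" using BAU[of "1-A"] CU by (simp add: mult.assoc)
  then show "A*A + B*A*C = A" by (simp add: algebra_simps)
  have "B*A*D = B*A*(1 - U*B)" using DU by simp
  also have "\<dots> = B*A - B*(A*(U*B))" by (simp add: algebra_simps)
  finally have "B*A*D = B*A - A*B" using BAU[of B] by simp
  then show "A*B + B*A*D = B*A" by simp
  have "Q*B = (B*U - A)*B" using Q2 by simp
  then have "Q*B = B*U*B - A*B" by (simp add: algebra_simps)
  moreover have "B*Q = B*(U*B - Bi*A*B)" using Q1 by simp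
  moreover have "B*(U*B - Bi*A*B) = B*U*B - A*B" using cB by (simp add: algebra_simps)
  ultimately show "Q*B = B*Q" by simp
  have BU: "B*U = Q + A" using Q2 by simp
  have "B*C = (Q + A)*(1-A)" using CU BU by (metis mult.assoc)
  then show "A*A + B*C = Q + (1-Q)*A" by (simp add: algebra_simps)
  have "B*D = B*(1 - U*B)" using DU by simp
  also have "\<dots> = B - (B*U)*B" by (simp add: algebra_simps)
  finally have "B*D = B - (Q+A)*B" using BU by simp
  then show "A*B + B*D = (1-Q)*B" by (simp add: algebra_simps)
qed

definition Lm :: "nat \<Rightarrow> nat \<Rightarrow> 'a::ring_1" where "Lm r c = (if c \<le> r then 1 else 0)"
definition Em :: "nat \<Rightarrow> nat \<Rightarrow> 'a::ring_1" where
  "Em r c = (if r = c then 1 else if r = c + 1 then -1 else 0)"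
definition Xm :: "'a::ring_1 \<Rightarrow> 'a \<Rightarrow> nat \<Rightarrow> nat \<Rightarrow> 'a" where
  "Xm A B r c = (if r = c then B^(c-1) else if r = c+1 then B^(c-1)*(A-1) else 0)"
definition Xi :: "'a::ring_1 \<Rightarrow> 'a \<Rightarrow> nat \<Rightarrow> nat \<Rightarrow> 'a" where
  "Xi K Bi r c = (if c \<le> r then K^(r-c) * Bi^(c-1) else 0)"

lemma LE: "mat_eq n (mat_mult n Lm Em) (mat_id :: nat \<Rightarrow> nat \<Rightarrow> 'a::ring_1)"
proof -
  have "mat_mult n Lm Em r c = (mat_id r c :: 'a)" if "1 \<le> r" "r \<le> n" "1 \<le> c" "c \<le> n" for r c
  proof -
    have "mat_mult n Lm Em r c = (if c \<in> {1..n} then Lm r c * Em c c else 0)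
       + (if c+1 \<in> {1..n} then Lm r (c+1) * Em (c+1) c else (0::'a))"
      unfolding mat_mult_def by (rule sum_two) (auto simp: Em_def)
    then show ?thesis using that by (auto simp: Lm_def Em_def mat_id_def)
  qed
  then show ?thesis unfolding mat_eq_def by auto
qed

lemma EL: "mat_eq n (mat_mult n Em Lm) (mat_id :: nat \<Rightarrow> nat \<Rightarrow> 'a::ring_1)"
proof -
  have "mat_mult n Em Lm r c = (mat_id r c :: 'a)" if "1 \<le> r" "r \<le> n" "1 \<le> c" "c \<le> n" for r c
  proof -
    have "mat_mult n Em Lm r c = (if r \<in> {1..n} then Em r r * Lm r c else 0)
       + (if r-1 \<in> {1..n} then Em r (r-1) * Lm (r-1) c else (0::'a))"
      unfolding mat_mult_def by (rule sum_two) (use that in \<open>auto simp: Em_def\<close>)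
    then show ?thesis using that by (auto simp: Lm_def Em_def mat_id_def)
  qed
  then show ?thesis unfolding mat_eq_def by auto
qed

lemma pow_inv:
  fixes B Bi :: "'a::ring_1"
  assumes "B*Bi = 1" "Bi*B = 1"
  shows "B^m * Bi^m = 1" "Bi^m * B^m = 1"
proof -
  show "B^m * Bi^m = 1"
  proof (induction m)
    case (Suc m)
    have "B^Suc m * Bi^Suc m = B^m * (B * Bi) * Bi^m"
      by (simp only: power_Suc2[of B] power_Suc[of Bi] mult.assoc)
    then show ?case using Suc assms by simp
  qed simp
  show "Bi^m * B^m = 1"
  proof (induction m)
    case (Suc m)
    have "Bi^Suc m * B^Suc m = Bi^m * (Bi * B) * B^m"
      by (simp only: power_Suc2[of Bi] power_Suc[of B] mult.assoc)
    then show ?case using Suc assms by simp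
  qed simp
qed

lemma XXi:
  fixes A B Bi :: "'a::ring_1"
  assumes b1: "B*Bi = 1" and b2: "Bi*B = 1"
  shows "mat_eq n (mat_mult n (Xm A B) (Xi (Bi*(1-A)) Bi)) mat_id"
proof -
  define K where "K = Bi*(1-A)"
  have "mat_mult n (Xm A B) (Xi K Bi) r c = mat_id r c" if "1 \<le> r" "r \<le> n" "1 \<le> c" "c \<le> n" for r c
  proof -
    have s: "mat_mult n (Xm A B) (Xi K Bi) r c = (if r \<in> {1..n} then Xm A B r r * Xi K Bi r c else 0)
       + (if r-1 \<in> {1..n} then Xm A B r (r-1) * Xi K Bi (r-1) c else 0)"
      unfolding mat_mult_def by (rule sum_two) (use that in \<open>auto simp: Xm_def\<close>)
    consider "r < c" | "r = c" | "c < r" by linarith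
    then show ?thesis
    proof cases
      case 1 then show ?thesis using s by (simp add: Xi_def mat_id_def)
    next
      case 2 then show ?thesis using s that pow_inv[OF b1 b2] by (simp add: Xi_def Xm_def mat_id_def)
    next
      case 3
      define j where "j = r - 2"
      define m where "m = r - c - 1"
      have r: "r = Suc (Suc j)" using 3 that unfolding j_def by simp
      have rc: "r - c = Suc m" using 3 unfolding m_def by simp
      have rc2: "r - 1 - c = m" using rc by simp
      have "mat_mult n (Xm A B) (Xi K Bi) r c = B^(Suc j) * (K^(Suc m) * Bi^(c-1)) + B^j*(A-1) * (K^m * Bi^(c-1))"
        using s 3 that r rc rc2 by (simp add: Xi_def Xm_def)
      also have "\<dots> = B^j * (B*K + (A-1)) * K^m * Bi^(c-1)"
        by (simp add: algebra_simps power_Suc2[of B] power_Suc[of K] del: power_Suc)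
      also have "B*K = 1 - A" unfolding K_def by (simp add: mult.assoc[symmetric] b1)
      finally show ?thesis using 3 by (simp add: mat_id_def)
    qed
  qed
  then show ?thesis unfolding mat_eq_def K_def by auto
qed

lemma XiX:
  fixes A B Bi :: "'a::ring_1"
  assumes b1: "B*Bi = 1" and b2: "Bi*B = 1"
  shows "mat_eq n (mat_mult n (Xi (Bi*(1-A)) Bi) (Xm A B)) mat_id"
proof -
  define K where "K = Bi*(1-A)"
  have "mat_mult n (Xi K Bi) (Xm A B) r c = mat_id r c" if "1 \<le> r" "r \<le> n" "1 \<le> c" "c \<le> n" for r c
  proof -
    have s: "mat_mult n (Xi K Bi) (Xm A B) r c = (if c \<in> {1..n} then Xi K Bi r c * Xm A B c c else 0)
       + (if c+1 \<in> {1..n} then Xi K Bi r (c+1) * Xm A B (c+1) c else 0)"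
      unfolding mat_mult_def by (rule sum_two) (use that in \<open>auto simp: Xm_def\<close>)
    consider "r < c" | "r = c" | "c < r" by linarith
    then show ?thesis
    proof cases
      case 1 then show ?thesis using s by (simp add: Xi_def mat_id_def)
    next
      case 2 then show ?thesis using s that pow_inv[OF b1 b2] by (simp add: Xi_def Xm_def mat_id_def)
    next
      case 3
      define m where "m = r - c - 1"
      define j where "j = c - 1"
      have rc: "r - c = Suc m" using 3 unfolding m_def by simp
      have rc2: "r - Suc c = m" using rc by simp
      have c: "c = Suc j" using that unfolding j_def by simp
      have "mat_mult n (Xi K Bi) (Xm A B) r c = K^(Suc m) * Bi^j * B^j + K^m * Bi^(Suc j) * (B^j*(A-1))"
        using s 3 that rc rc2 c by (simp add: Xi_def Xm_def)
      also have "\<dots> = K^m * (K * (Bi^j * B^j) + Bi * (Bi^j * B^j) * (A-1))"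
        by (simp add: algebra_simps power_Suc2[of K] power_Suc[of Bi] del: power_Suc)
      also have "\<dots> = 0" using pow_inv[OF b1 b2] unfolding K_def by (simp add: algebra_simps)
      finally show ?thesis using 3 by (simp add: mat_id_def)
    qed
  qed
  then show ?thesis unfolding mat_eq_def K_def by auto
qed

lemma LX:
  fixes A B :: "'a::ring_1"
  shows "mat_eq n (mat_mult n Lm (Xm A B))
    (\<lambda>r c. if r = 1 then (if c = 1 then 1 else 0)
                    else if c < r then B ^ (c - 1) * A
                    else if c = r then B ^ (r - 1) else 0)"
proof -
  have "mat_mult n Lm (Xm A B) r c = (if r = 1 then (if c = 1 then 1 else 0)
                    else if c < r then B ^ (c - 1) * A
                    else if c = r then B ^ (r - 1) else 0)" if "1 \<le> r" "r \<le> n" "1 \<le> c" "c \<le> n" for r c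
  proof -
    have s: "mat_mult n Lm (Xm A B) r c = (if c \<in> {1..n} then Lm r c * Xm A B c c else 0)
       + (if c+1 \<in> {1..n} then Lm r (c+1) * Xm A B (c+1) c else 0)"
      unfolding mat_mult_def by (rule sum_two) (use that in \<open>auto simp: Xm_def\<close>)
    consider "r = 1" | "r \<noteq> 1" "c < r" | "r \<noteq> 1" "c = r" | "r \<noteq> 1" "r < c" by linarith
    then show ?thesis
    proof cases
      case 1 then show ?thesis using s that by (simp add: Lm_def Xm_def)
    next
      case 2
      then have "mat_mult n Lm (Xm A B) r c = B^(c-1) + B^(c-1)*(A-1)"
        using s that by (simp add: Lm_def Xm_def)
      also have "\<dots> = B^(c-1)*A" by (simp add: algebra_simps)
      finally show ?thesis using 2 by simp
    next
      case 3 then show ?thesis using s that by (simp add: Lm_def Xm_def)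
    next
      case 4 then show ?thesis using s that by (simp add: Lm_def Xm_def)
    qed
  qed
  then show ?thesis unfolding mat_eq_def by auto
qed

lemma MR_entry:
  fixes M :: "nat \<Rightarrow> nat \<Rightarrow> 'a::ring_1"
  assumes "1 \<le> i" "i+1 \<le> n" "1 \<le> c" "c \<le> n"
  shows "mat_mult n M (rho (mat2 a b cc d) n i) r c =
    (if c = i then M r i * a + M r (i+1) * cc else if c = i+1 then M r i * b + M r (i+1) * d else M r c)"
proof -
  consider "c = i" | "c = i+1" | "c \<noteq> i" "c \<noteq> i+1" by blast
  then show ?thesis
  proof cases
    case 1
    have "mat_mult n M (rho (mat2 a b cc d) n i) r c =
      (if i \<in> {1..n} then M r i * rho (mat2 a b cc d) n i i c else 0) +
      (if i+1 \<in> {1..n} then M r (i+1) * rho (mat2 a b cc d) n i (i+1) c else 0)"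
      unfolding mat_mult_def by (rule sum_two) (use 1 in \<open>auto simp: rho_def mat_id_def\<close>)
    then show ?thesis using 1 assms by (simp add: rho_def mat2_def)
  next
    case 2
    have "mat_mult n M (rho (mat2 a b cc d) n i) r c =
      (if i \<in> {1..n} then M r i * rho (mat2 a b cc d) n i i c else 0) +
      (if i+1 \<in> {1..n} then M r (i+1) * rho (mat2 a b cc d) n i (i+1) c else 0)"
      unfolding mat_mult_def by (rule sum_two) (use 2 in \<open>auto simp: rho_def mat_id_def\<close>)
    then show ?thesis using 2 assms by (simp add: rho_def mat2_def)
  next
    case 3
    have "mat_mult n M (rho (mat2 a b cc d) n i) r c =
      (if c \<in> {1..n} then M r c * rho (mat2 a b cc d) n i c c else 0) +
      (if 0 \<in> {1..n} then M r 0 * rho (mat2 a b cc d) n i 0 c else 0)"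
      unfolding mat_mult_def using assms by (intro sum_two) (use 3 in \<open>auto simp: rho_def mat_id_def\<close>)
    then show ?thesis using 3 assms by (simp add: rho_def mat_id_def)
  qed
qed

lemma RM_entry:
  fixes M :: "nat \<Rightarrow> nat \<Rightarrow> 'a::ring_1"
  assumes "1 \<le> i" "i+1 \<le> n" "1 \<le> r" "r \<le> n"
  shows "mat_mult n (rho (mat2 a b cc d) n i) M r c =
    (if r = i then a * M i c + b * M (i+1) c else if r = i+1 then cc * M i c + d * M (i+1) c else M r c)"
proof -
  consider "r = i" | "r = i+1" | "r \<noteq> i" "r \<noteq> i+1" by blast
  then show ?thesis
  proof cases
    case 1
    have "mat_mult n (rho (mat2 a b cc d) n i) M r c =
      (if i \<in> {1..n} then rho (mat2 a b cc d) n i r i * M i c else 0) +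
      (if i+1 \<in> {1..n} then rho (mat2 a b cc d) n i r (i+1) * M (i+1) c else 0)"
      unfolding mat_mult_def by (rule sum_two) (use 1 in \<open>auto simp: rho_def mat_id_def\<close>)
    then show ?thesis using 1 assms by (simp add: rho_def mat2_def)
  next
    case 2
    have "mat_mult n (rho (mat2 a b cc d) n i) M r c =
      (if i \<in> {1..n} then rho (mat2 a b cc d) n i r i * M i c else 0) +
      (if i+1 \<in> {1..n} then rho (mat2 a b cc d) n i r (i+1) * M (i+1) c else 0)"
      unfolding mat_mult_def by (rule sum_two) (use 2 in \<open>auto simp: rho_def mat_id_def\<close>)
    then show ?thesis using 2 assms by (simp add: rho_def mat2_def)
  next
    case 3
    have "mat_mult n (rho (mat2 a b cc d) n i) M r c =
      (if r \<in> {1..n} then rho (mat2 a b cc d) n i r r * M r c else 0) +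
      (if 0 \<in> {1..n} then rho (mat2 a b cc d) n i r 0 * M 0 c else 0)"
      unfolding mat_mult_def using assms by (intro sum_two) (use 3 in \<open>auto simp: rho_def mat_id_def\<close>)
    then show ?thesis using 3 assms by (simp add: rho_def mat_id_def)
  qed
qed

lemma Q_pow_comm:
  fixes Q B :: "'a::ring_1"
  assumes "Q*B = B*Q"
  shows "Q*B^j = B^j*Q"
proof (induction j)
  case (Suc j)
  have "Q*B^Suc j = (Q*B)*B^j" by (simp add: mult.assoc)
  also have "\<dots> = B*(Q*B^j)" using assms by (simp add: mult.assoc)
  also have "\<dots> = B^Suc j * Q" using Suc by (simp add: mult.assoc)
  finally show ?case .
qed simp

lemma intertw:
  fixes A B C D Q :: "'a::ring_1" and M :: "nat \<Rightarrow> nat \<Rightarrow> 'a"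
  assumes Mf: "\<And>r c. 1 \<le> r \<Longrightarrow> 1 \<le> c \<Longrightarrow>
      M r c = (if c < r then B^(c-1)*A else if c = r then B^(r-1) else 0)"
    and I1: "A*A + B*A*C = A" and I2: "A*B + B*A*D = B*A" and I3: "Q*B = B*Q"
    and I4: "A*A + B*C = Q + (1-Q)*A" and I5: "A*B + B*D = (1-Q)*B"
    and i: "1 \<le> i" and r: "1 \<le> r" and c: "1 \<le> c"
  shows "(if c = i then M r i * A + M r (i+1) * C else if c = i+1 then M r i * B + M r (i+1) * D else M r c)
       = (if r = i then M (i+1) c else if r = i+1 then Q * M i c + (1-Q) * M (i+1) c else M r c)"
proof -
  define j where "j = i - 1"
  have ij: "i = Suc j" using i unfolding j_def by simp
  have Bi: "B^i = B^j * B" unfolding ij by (rule power_Suc2)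
  have QB: "Q*B^j = B^j*Q" using Q_pow_comm[OF I3] .
  have QBA: "Q*(B^j*x) = B^j*(Q*x)" for x using QB by (metis mult.assoc)
  have Mii: "M i i = B^j" using Mf[of i i] i ij by simp
  have Mi1i: "M (i+1) i = B^j*A" using Mf[of "i+1" i] i ij by simp
  have Mi1i1: "M (i+1) (i+1) = B^j*B" using Mf[of "i+1" "i+1"] i Bi by simp
  have Mii1: "M i (i+1) = 0" using Mf[of i "i+1"] i by simp
  consider "c = i" | "c = i+1" | "c \<noteq> i" "c \<noteq> i+1" by blast
  then show ?thesis
  proof cases
    case 1
    consider "r = i" | "r = i+1" | "r < i" | "r > i+1" by linarith
    then show ?thesis
    proof cases
      case 1 then show ?thesis using \<open>c = i\<close> Mii Mii1 Mi1i by simp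
    next
      case 2
      have "B^j*A*A + B^j*B*C = B^j*(A*A + B*C)" by (simp add: algebra_simps)
      also have "\<dots> = B^j*Q + B^j*A - B^j*Q*A" unfolding I4 by (simp add: algebra_simps)
      also have "\<dots> = Q*B^j + (1-Q)*(B^j*A)" using QB QBA by (simp add: algebra_simps)
      finally show ?thesis using 2 \<open>c = i\<close> Mii Mi1i Mi1i1 by (simp add: mult.assoc)
    next
      case 3 then show ?thesis using \<open>c = i\<close> Mf[of r i] Mf[of r "i+1"] r i by simp
    next
      case 4
      have Mr: "M r i = B^j*A" "M r (i+1) = B^j*B*A" using Mf[of r i] Mf[of r "i+1"] 4 r i Bi ij by auto
      have "B^j*A*A + B^j*B*A*C = B^j*(A*A + B*A*C)" by (simp add: algebra_simps)
      also have "\<dots> = B^j*A" using I1 by simp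
      finally show ?thesis using 4 \<open>c = i\<close> Mr by (simp add: mult.assoc)
    qed
  next
    case 2
    consider "r = i" | "r = i+1" | "r < i" | "r > i+1" by linarith
    then show ?thesis
    proof cases
      case 1 then show ?thesis using \<open>c = i+1\<close> Mii Mii1 Mi1i1 by simp
    next
      case 2
      have "B^j*A*B + B^j*B*D = B^j*(A*B + B*D)" by (simp add: algebra_simps)
      also have "\<dots> = B^j*B - B^j*Q*B" unfolding I5 by (simp add: algebra_simps)
      also have "\<dots> = (1-Q)*(B^j*B)" using QB QBA by (simp add: algebra_simps)
      finally show ?thesis using 2 \<open>c = i+1\<close> Mii1 Mi1i Mi1i1 by (simp add: mult.assoc)
    next
      case 3 then show ?thesis using \<open>c = i+1\<close> Mf[of r i] Mf[of r "i+1"] r i by simp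
    next
      case 4
      have Mr: "M r i = B^j*A" "M r (i+1) = B^j*B*A" using Mf[of r i] Mf[of r "i+1"] 4 r i Bi ij by auto
      have "B^j*A*B + B^j*B*A*D = B^j*(A*B + B*A*D)" by (simp add: algebra_simps)
      also have "\<dots> = B^j*B*A" using I2 by (simp add: mult.assoc)
      finally show ?thesis using 4 \<open>c = i+1\<close> Mr by (simp add: mult.assoc)
    qed
  next
    case 3
    have same: "M i c = M (i+1) c" using Mf[of i c] Mf[of "i+1" c] 3 i c by auto
    have "Q * M i c + (1-Q) * M (i+1) c = M (i+1) c" unfolding same by (simp add: algebra_simps)
    then show ?thesis using 3 same by auto
  qed
qed

lemma inv_elem_eq:
  fixes A Ai :: "'a::ring_1"
  assumes "A*Ai = 1" "Ai*A = 1"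
  shows "inverse_elem A = Ai"
  unfolding inverse_elem_def
proof (rule the_equality)
  show "A * Ai = 1 \<and> Ai * A = 1" using assms by simp
next
  fix y assume "A * y = 1 \<and> y * A = 1"
  then have "Ai * (A * y) = Ai" "(Ai * A) * y = y" using assms by simp_all
  then show "y = Ai" by (simp add: mult.assoc)
qed

theorem lemma2p2:
  fixes A B C D :: "'a::ring_1" and n :: nat
  assumes sw: "nc_switch A B C D"
    and n: "n \<ge> 2"
  defines "Q \<equiv> (1 - A) * (1 - D)"
    and "M \<equiv> (\<lambda>r c. if r = 1 then (if c = 1 then 1 else 0)
                    else if c < r then B ^ (c - 1) * A
                    else if c = r then B ^ (r - 1) else 0)"
  shows "\<exists>Minv. mat_eq n (mat_mult n Minv M) mat_id \<and> mat_eq n (mat_mult n M Minv) mat_id \<and>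
           (\<forall>i. 1 \<le> i \<and> i \<le> n - 1 \<longrightarrow>
              mat_eq n (rho (mat2 A B C D) n i)
                       (mat_mult n Minv (mat_mult n (rho (mat2 0 1 Q (1 - Q)) n i) M)))"
proof -
  obtain Ai where a1: "A*Ai = 1" and a2: "Ai*A = 1"
    using sw unfolding nc_switch_def invertible_elem_def by blast
  obtain Bi where b1: "B*Bi = 1" and b2: "Bi*B = 1"
    using sw unfolding nc_switch_def invertible_elem_def by blast
  have iA: "inverse_elem A = Ai" by (rule inv_elem_eq[OF a1 a2])
  have iB: "inverse_elem B = Bi" by (rule inv_elem_eq[OF b1 b2])
  have fund: "Ai*Bi*A*B - B*Ai*Bi*A = Bi*A*B - A"
    and Cd: "C = Ai*Bi*A*(1-A)" and Dd: "D = 1 - Ai*Bi*A*B"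
    using sw unfolding nc_switch_def Let_def iA iB by auto
  note RF = ring_facts[OF a1 a2 b1 b2 fund Cd Dd Q_def[THEN meta_eq_to_obj_eq]]
  define Minv where "Minv = mat_mult n (Xi (Bi*(1-A)) Bi) Em"
  have MLX: "mat_eq n M (mat_mult n Lm (Xm A B))"
    unfolding M_def by (rule mat_eq_sym[OF LX])
  note IP = inv_prod[OF LE EL XXi[OF b1 b2, of n A] XiX[OF b1 b2, of n A]]
  have inv1: "mat_eq n (mat_mult n Minv M) mat_id"
    unfolding Minv_def
    by (rule mat_eq_trans[OF mat_mult_cong[OF mat_eq_refl MLX] IP(2)])
  have inv2: "mat_eq n (mat_mult n M Minv) mat_id"
    unfolding Minv_def
    by (rule mat_eq_trans[OF mat_mult_cong[OF MLX mat_eq_refl] IP(1)])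
  have Mf: "M r c = (if c < r then B^(c-1)*A else if c = r then B^(r-1) else 0)"
    if "1 \<le> r" "1 \<le> c" for r c
    using that unfolding M_def by auto
  have comm: "mat_eq n (mat_mult n M (rho (mat2 A B C D) n i)) (mat_mult n (rho (mat2 0 1 Q (1 - Q)) n i) M)"
    if i: "1 \<le> i" "i \<le> n - 1" for i
  proof -
    have "mat_mult n M (rho (mat2 A B C D) n i) r c = mat_mult n (rho (mat2 0 1 Q (1 - Q)) n i) M r c"
      if "1 \<le> r" "r \<le> n" "1 \<le> c" "c \<le> n" for r c
    proof -
      have i1: "i + 1 \<le> n" using i n by simp
      show ?thesis
        unfolding MR_entry[OF i(1) i1 that(3,4)] RM_entry[OF i(1) i1 that(1,2)]
        using intertw[OF Mf RF(1-5) i(1) that(1) that(3)] by simp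
    qed
    then show ?thesis unfolding mat_eq_def by auto
  qed
  have main: "mat_eq n (rho (mat2 A B C D) n i)
                (mat_mult n Minv (mat_mult n (rho (mat2 0 1 Q (1 - Q)) n i) M))"
    if i: "1 \<le> i" "i \<le> n - 1" for i
  proof -
    let ?R = "rho (mat2 A B C D) n i" and ?R' = "rho (mat2 0 1 Q (1 - Q)) n i"
    have "mat_eq n ?R (mat_mult n mat_id ?R)" by (rule mat_eq_sym[OF mat_id_left])
    also have "mat_eq n \<dots> (mat_mult n (mat_mult n Minv M) ?R)"
      by (rule mat_mult_cong[OF mat_eq_sym[OF inv1] mat_eq_refl])
    also have "mat_eq n \<dots> (mat_mult n Minv (mat_mult n M ?R))" by (rule assoc_eq)
    also have "mat_eq n \<dots> (mat_mult n Minv (mat_mult n ?R' M))"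
      by (rule mat_mult_cong[OF mat_eq_refl comm[OF i]])
    finally show ?thesis .
  qed
  show ?thesis using inv1 inv2 main by blast
qed

end
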